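(* Let $\mathcal{H}$ be a real Hilbert space, $\alpha,\beta>0$, and $f(\theta)=\beta\exp\big(\frac{\|\theta\|^2}{2\alpha}\big)$ for $\theta\in\mathcal{H}$. Then for all $w\in\mathcal{H}$, \[ f^*(w)\ \le\ \|w\|\sqrt{2\alpha\log\Big(\frac{\sqrt{\alpha}\,\|w\|}{\beta}+1\Big)}-\beta. \]
   Context: $f^*(w)=\sup_{\theta\in\mathcal{H}}(\langle\theta,w\rangle-f(\theta))$ is the Fenchel conjugate. *)

theory Defs
  imports "HOL-Analysis.Analysis"
begin

definition fenchel_conj :: "('a::real_inner \<Rightarrow> real) \<Rightarrow> 'a \<Rightarrow> ereal" where
  "fenchel_conj f w = (SUP \<theta>. ereal (inner \<theta> w - f \<theta>))"

end

theory Submission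
  imports Defs
begin

lemma key_m:
  fixes m :: real assumes "m \<ge> 0"
  shows "exp (m^2/2) * (1 - m) \<le> 1"
proof (cases "m \<le> 1")
  case True
  have "1 - m \<le> exp (-m)" using exp_ge_add_one_self[of "-m"] by simp
  hence "exp (m^2/2) * (1 - m) \<le> exp (m^2/2) * exp (-m)"
    using True by (intro mult_left_mono) auto
  also have "\<dots> = exp (m^2/2 - m)" by (simp add: exp_add[symmetric])
  also have "\<dots> \<le> 1"
  proof -
    have "m^2 \<le> m" using True assms by (simp add: power2_eq_square mult_le_cancel_right1 mult_left_le)
    thus ?thesis using assms by simp
  qed
  finally show ?thesis .
next
  case False
  hence "exp (m^2/2) * (1 - m) \<le> 0" by (intro mult_nonneg_nonpos) auto
  thus ?thesis by simp
qed

lemma scalar: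
  fixes \<alpha> \<beta> r t :: real
  assumes a: "\<alpha> > 0" and b: "\<beta> > 0" and r: "r \<ge> 0" and t: "t \<ge> 0"
  shows "t * r - \<beta> * exp (t^2/(2*\<alpha>)) \<le> r * sqrt (2 * \<alpha> * ln (sqrt \<alpha> * r / \<beta> + 1)) - \<beta>"
proof -
  define s where "s = sqrt \<alpha>"
  have s: "s > 0" "s^2 = \<alpha>" using a by (auto simp: s_def)
  define E where "E = s * r / \<beta> + 1"
  have E1: "E \<ge> 1" using s r b by (simp add: E_def)
  define L where "L = sqrt (2 * \<alpha> * ln E)"
  have lnE: "ln E \<ge> 0" using E1 by simp
  have aE: "0 \<le> \<alpha> * ln E" using a lnE by (simp add: zero_le_mult_iff)
  have L0: "L \<ge> 0" using aE by (simp add: L_def)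
  have L2: "L^2 = 2 * \<alpha> * ln E" using a lnE by (simp add: L_def)
  have eL: "exp (L^2/(2*\<alpha>)) = E" using L2 a E1 by simp
  define m where "m = L / s"
  have m0: "m \<ge> 0" using L0 s by (simp add: m_def)
  have mm: "m^2/2 = L^2/(2*\<alpha>)" using s by (simp add: m_def power_divide)
  have "E * (1 - m) \<le> 1" using key_m[OF m0] mm eL by simp
  hence "E - 1 \<le> E * m" by (simp add: algebra_simps)
  hence "s * r / \<beta> \<le> E * L / s" by (simp add: E_def m_def)
  hence K: "r \<le> \<beta> * E * L / \<alpha>" using s b
    by (simp add: field_simps power2_eq_square) (simp add: pos_le_divide_eq a mult.commute)
  have goal: "t * r - \<beta> * exp (t^2/(2*\<alpha>)) \<le> r * L - \<beta>"
  proof (cases "t \<le> L")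
    case True
    have "t * r \<le> L * r" using True r by (intro mult_right_mono) auto
    moreover have "\<beta> * 1 \<le> \<beta> * exp (t^2/(2*\<alpha>))" using b a by (intro mult_left_mono) auto
    ultimately show ?thesis by (simp add: mult.commute)
  next
    case False
    have tang: "exp (t^2/(2*\<alpha>)) \<ge> E * (1 + (t^2/(2*\<alpha>) - L^2/(2*\<alpha>)))"
    proof -
      have "exp (t^2/(2*\<alpha>) - L^2/(2*\<alpha>)) \<ge> 1 + (t^2/(2*\<alpha>) - L^2/(2*\<alpha>))"
        by (rule exp_ge_add_one_self)
      hence "E * exp (t^2/(2*\<alpha>) - L^2/(2*\<alpha>)) \<ge> E * (1 + (t^2/(2*\<alpha>) - L^2/(2*\<alpha>)))"
        using E1 by (intro mult_left_mono) auto
      moreover have "E * exp (t^2/(2*\<alpha>) - L^2/(2*\<alpha>)) = exp (t^2/(2*\<alpha>))"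
        using eL E1 by (simp add: exp_diff)
      ultimately show ?thesis by simp
    qed
    have q: "(t^2/(2*\<alpha>) - L^2/(2*\<alpha>)) \<ge> L * (t - L) / \<alpha>"
    proof -
      have "t^2 - L^2 \<ge> 2 * L * (t - L)"
        using zero_le_power2[of "t - L"] by (simp add: power2_eq_square algebra_simps)
      hence "(t^2 - L^2) / (2*\<alpha>) \<ge> 2 * L * (t - L) / (2*\<alpha>)" using a
        by (intro divide_right_mono) auto
      thus ?thesis using a by (simp add: diff_divide_distrib)
    qed
    have "E * (1 + (t^2/(2*\<alpha>) - L^2/(2*\<alpha>))) \<ge> E * (1 + L * (t - L) / \<alpha>)"
      using q E1 by (intro mult_left_mono) auto
    with tang have ex: "exp (t^2/(2*\<alpha>)) \<ge> E + E * L * (t - L) / \<alpha>"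
      by (simp add: algebra_simps)
    have "\<beta> * exp (t^2/(2*\<alpha>)) \<ge> \<beta> * (E + E * L * (t - L) / \<alpha>)"
      using ex b by (intro mult_left_mono) auto
    moreover have "\<beta> * E = s * r + \<beta>" using b by (simp add: E_def field_simps)
    moreover have "r * (t - L) \<le> \<beta> * E * L / \<alpha> * (t - L)"
      using K False by (intro mult_right_mono) auto
    moreover have "s * r \<ge> 0" using s r by simp
    moreover have "\<beta> * (E + E * L * (t - L) / \<alpha>) = \<beta> * E + \<beta> * E * L / \<alpha> * (t - L)"
      by (simp add: algebra_simps)
    moreover have "r * (t - L) = t * r - r * L" by (simp add: algebra_simps)
    ultimately show ?thesis by linarith
  qed
  thus ?thesis by (simp add: L_def E_def s_def)
qed

theorem lemma14:
  fixes \<alpha> \<beta> :: real and w :: "'a::{real_inner, complete_space}"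
  assumes "\<alpha> > 0" and "\<beta> > 0"
  shows "fenchel_conj (\<lambda>\<theta>::'a. \<beta> * exp (norm \<theta> ^ 2 / (2 * \<alpha>))) w
     \<le> ereal (norm w * sqrt (2 * \<alpha> * ln (sqrt \<alpha> * norm w / \<beta> + 1)) - \<beta>)"
  unfolding fenchel_conj_def
proof (rule SUP_least)
  fix \<theta> :: 'a
  have "inner \<theta> w \<le> norm \<theta> * norm w" by (rule norm_cauchy_schwarz)
  moreover have "norm \<theta> * norm w - \<beta> * exp (norm \<theta> ^ 2 / (2 * \<alpha>))
      \<le> norm w * sqrt (2 * \<alpha> * ln (sqrt \<alpha> * norm w / \<beta> + 1)) - \<beta>"
    by (rule scalar) (use assms in auto)
  ultimately show "ereal (inner \<theta> w - \<beta> * exp (norm \<theta> ^ 2 / (2 * \<alpha>)))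
      \<le> ereal (norm w * sqrt (2 * \<alpha> * ln (sqrt \<alpha> * norm w / \<beta> + 1)) - \<beta>)"
    by simp
qed

end
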